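(* Let $K$ be a field of characteristic $0$, $n\ge2$, and let $f=\sum_{i_1,\dots,i_n\ge0}a_{i_1,\dots,i_n}x_1^{i_1}\cdots x_n^{i_n}\in K[[x_1,\dots,x_n]]$ (not necessarily D-finite). Define $$\sigma(f)=\frac{1}{s_1\cdots s_{n-1}}\,f\Bigl(s_1,\frac{s_2}{s_1},\frac{s_3}{s_2},\dots,\frac{s_{n-1}}{s_{n-2}},\frac{t}{s_{n-1}}\Bigr),$$ a formal series in $s_1,\dots,s_{n-1}$ (integer exponents) and $t$ (non-negative exponents). Fix any lexicographical order on monomials in $D_{s_1},\dots,D_{s_{n-1}}$. Let $P\in(K[t]\langle D_t\rangle)[D_{s_1},\dots,D_{s_{n-1}}]$ be non-zero, let $D_{s_1}^{\alpha_1}\cdots D_{s_{n-1}}^{\alpha_{n-1}}$ be the smallest monomial occurring in $P$ with non-zero coefficient, and write $P=\tilde P(t;D_t)D_{s_1}^{\alpha_1}\cdots D_{s_{n-1}}^{\alpha_{n-1}}+(\text{terms with higher monomials})$ with $\tilde P\in K[t]\langle D_t\rangle$ non-zero. If $P(\sigma(f))=0$, then $\tilde P$ annihilates the complete diagonal $\Delta(f)=\sum_{i\ge0}a_{i,\dots,i}t^i$.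
   Context: Operators act on series in $s_1,\dots,s_{n-1},t$ by multiplication by $t$ and termwise differentiation $D_t=\partial/\partial t$, $D_{s_i}=\partial/\partial s_i$; coefficients in $K[t]\langle D_t\rangle$ are written to the left of monomials in the $D_{s_i}$. *)

theory Defs
  imports "HOL-Computational_Algebra.Computational_Algebra"
begin

text \<open>A formal series in s_1..s_(n-1) (integer exponents) and t (non-negative exponents),
  given by its coefficient function: F e k is the coefficient of s^e t^k,
  where e is the list of exponents of s_1,...,s_(n-1).\<close>
type_synonym 'a sseries = "int list \<Rightarrow> nat \<Rightarrow> 'a"

text \<open>The multivariate series f in K[[x_1..x_n]] is given by its coefficients
  a :: nat list => 'a (meaningful on lists of length n).
  sigma(f): the monomial x^i goes to s_1^(i_1-i_2-1) ... s_(n-1)^(i_(n-1)-i_n-1) t^(i_n);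
  this map is injective, with inverse i_n = k, i_j = k + sum_(l=j..n-1) (e_l + 1).\<close>
definition sigma_idx :: "nat \<Rightarrow> int list \<Rightarrow> nat \<Rightarrow> int list" where
  "sigma_idx n e k = map (\<lambda>j. int k + (\<Sum>l\<in>{j..<n-1}. e ! l + 1)) [0..<n]"

definition sigma :: "nat \<Rightarrow> (nat list \<Rightarrow> 'a::field) \<Rightarrow> 'a sseries" where
  "sigma n a e k =
     (if length e = n - 1 \<and> (\<forall>x\<in>set (sigma_idx n e k). 0 \<le> x)
      then a (map nat (sigma_idx n e k)) else 0)"

definition Ds :: "nat \<Rightarrow> 'a::ring_1 sseries \<Rightarrow> 'a sseries" where
  "Ds i F = (\<lambda>e k. of_int (e ! i + 1) * F (e[i := e ! i + 1]) k)"

definition Dt :: "'a::ring_1 sseries \<Rightarrow> 'a sseries" where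
  "Dt F = (\<lambda>e k. of_nat (Suc k) * F e (Suc k))"

definition Mt :: "'a::ring_1 sseries \<Rightarrow> 'a sseries" where
  "Mt F = (\<lambda>e k. if k = 0 then 0 else F e (k - 1))"

definition Ds_mono :: "nat list \<Rightarrow> 'a::ring_1 sseries \<Rightarrow> 'a sseries" where
  "Ds_mono \<beta> F = foldr (\<lambda>i G. (Ds i ^^ (\<beta> ! i)) G) [0..<length \<beta>] F"

definition Mpoly :: "'a::ring_1 poly \<Rightarrow> 'a sseries \<Rightarrow> 'a sseries" where
  "Mpoly p F = (\<lambda>e k. \<Sum>l\<le>degree p. coeff p l * (Mt ^^ l) F e k)"

text \<open>An operator P in (K[t]<D_t>)[D_s_1..D_s_(n-1)] is represented by
  P :: nat list => nat => 'a poly, where P beta j is the polynomial p(t) in the term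
  p(t) D_t^j D_s^beta (coefficients in K[t]<D_t> in normal form sum_j p_j(t) D_t^j,
  written to the left of the D_s monomials).  A Weyl algebra element
  W in K[t]<D_t> is represented by W :: nat => 'a poly (W j = coefficient of D_t^j).\<close>
definition op_supp :: "(nat list \<Rightarrow> nat \<Rightarrow> 'a::zero) \<Rightarrow> (nat list \<times> nat) set" where
  "op_supp P = {(\<beta>, j). P \<beta> j \<noteq> 0}"

definition mono_supp :: "(nat list \<Rightarrow> nat \<Rightarrow> 'a::zero) \<Rightarrow> nat list set" where
  "mono_supp P = {\<beta>. \<exists>j. P \<beta> j \<noteq> 0}"

definition apply_op :: "(nat list \<Rightarrow> nat \<Rightarrow> 'a::ring_1 poly) \<Rightarrow> 'a sseries \<Rightarrow> 'a sseries" where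
  "apply_op P F = (\<lambda>e k. \<Sum>(\<beta>, j)\<in>op_supp P. Mpoly (P \<beta> j) ((Dt ^^ j) (Ds_mono \<beta> F)) e k)"

definition weyl_apply :: "(nat \<Rightarrow> 'a::field_char_0 poly) \<Rightarrow> 'a fps \<Rightarrow> 'a fps" where
  "weyl_apply W g = (\<Sum>j\<in>{j. W j \<noteq> 0}. fps_of_poly (W j) * (fps_deriv ^^ j) g)"

definition diag :: "nat \<Rightarrow> (nat list \<Rightarrow> 'a) \<Rightarrow> 'a::zero fps" where
  "diag n a = Abs_fps (\<lambda>k. a (replicate n k))"

text \<open>Lexicographic order on exponent vectors of length m, with respect to the variable
  order given by the permutation pi of {0..<m} (pi 0 is the most significant variable).\<close>
definition lex_less :: "nat \<Rightarrow> (nat \<Rightarrow> nat) \<Rightarrow> nat list \<Rightarrow> nat list \<Rightarrow> bool" where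
  "lex_less m \<pi> \<alpha> \<beta> =
     (\<exists>i<m. (\<forall>j<i. \<alpha> ! (\<pi> j) = \<beta> ! (\<pi> j)) \<and> \<alpha> ! (\<pi> i) < \<beta> ! (\<pi> i))"

end

theory Submission
  imports Defs
begin

definition sl :: "int list \<Rightarrow> 'a::comm_ring_1 sseries \<Rightarrow> 'a fps" where
  "sl e H = Abs_fps (H e)"

lemma sl_Dt: "sl e (Dt H) = fps_deriv (sl e H)"
  by (simp add: sl_def Dt_def fps_eq_iff fps_deriv_def)

lemma sl_Dt_pow: "sl e ((Dt^^j) H) = (fps_deriv^^j) (sl e H)"
  by (induction j) (simp_all add: sl_Dt)

lemma sl_Mt: "sl e (Mt H) = fps_X * sl e H"
  by (simp add: sl_def Mt_def fps_eq_iff)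

lemma sl_Mt_pow: "sl e ((Mt^^l) H) = fps_X^l * sl e H"
  by (induction l) (simp_all add: sl_Mt mult.assoc)

lemma sl_sum: "sl e (\<lambda>e k. \<Sum>x\<in>A. f x e k) = (\<Sum>x\<in>A. sl e (f x))"
  by (simp add: sl_def fps_eq_iff fps_sum_nth)

lemma sl_Mpoly: "sl e (Mpoly p H) = fps_of_poly p * sl e H"
proof -
  have "sl e (Mpoly p H) = (\<Sum>l\<le>degree p. fps_const (coeff p l) * sl e ((Mt^^l) H))"
    by (simp add: Mpoly_def sl_def fps_eq_iff fps_sum_nth)
  also have "\<dots> = (\<Sum>l\<le>degree p. fps_const (coeff p l) * fps_X^l) * sl e H"
    by (simp add: sl_Mt_pow sum_distrib_right mult.assoc)
  also have "(\<Sum>l\<le>degree p. fps_const (coeff p l) * fps_X^l) = fps_of_poly p"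
    by (subst (3) poly_as_sum_of_monoms[symmetric]) (simp add: fps_of_poly_sum fps_of_poly_monom)
  finally show ?thesis .
qed

lemma Ds_pow:
  assumes "i < length e"
  shows "(Ds i ^^ m) F e k = (\<Prod>r\<in>{1..m}. of_int (e!i + int r)) * F (e[i := e!i + int m]) k"
  using assms
proof (induction m arbitrary: e)
  case 0 then show ?case by simp
next
  case (Suc m)
  have "(Ds i ^^ Suc m) F e k = of_int (e!i+1) * (Ds i ^^ m) F (e[i := e!i + 1]) k"
    by (simp add: Ds_def)
  also have "\<dots> = of_int (e!i+1) * ((\<Prod>r\<in>{1..m}. of_int (e!i + 1 + int r)) * F (e[i := e!i + 1 + int m]) k)"
    using Suc by simp
  also have "(\<Prod>r\<in>{1..m}. (of_int (e!i + 1 + int r))::'a) = (\<Prod>r\<in>{2..Suc m}. of_int (e!i + int r))"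
    by (rule prod.reindex_bij_witness[where i="\<lambda>r. r - 1" and j="\<lambda>r. r + 1"]) auto
  also have "{1..Suc m} = insert 1 {2..Suc m}" by auto
  ultimately show ?case by (simp add: algebra_simps)
qed

lemma foldr_Ds:
  assumes "distinct is" "\<forall>i\<in>set is. i < length e"
  shows "foldr (\<lambda>i G. (Ds i ^^ m i) G) is F e k =
    (\<Prod>i\<in>set is. \<Prod>r\<in>{1..m i}. of_int (e!i + int r)) *
    F (map (\<lambda>j. if j \<in> set is then e!j + int (m j) else e!j) [0..<length e]) k"
  using assms
proof (induction "is" arbitrary: e)
  case Nil
  have "map (\<lambda>j. e!j) [0..<length e] = e" by (simp add: map_nth)
  then show ?case by simp
next
  case (Cons i "is")
  define e' where "e' = e[i := e!i + int (m i)]"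
  have len: "length e' = length e" by (simp add: e'_def)
  have same: "\<And>j. j \<in> set is \<Longrightarrow> e'!j = e!j" using Cons.prems by (auto simp: e'_def nth_list_update)
  have "foldr (\<lambda>i G. (Ds i ^^ m i) G) (i#is) F e k =
      (\<Prod>r\<in>{1..m i}. of_int (e!i + int r)) * foldr (\<lambda>i G. (Ds i ^^ m i) G) is F e' k"
    using Cons.prems by (simp add: Ds_pow e'_def)
  also have "foldr (\<lambda>i G. (Ds i ^^ m i) G) is F e' k =
    (\<Prod>i\<in>set is. \<Prod>r\<in>{1..m i}. of_int (e'!i + int r)) *
    F (map (\<lambda>j. if j \<in> set is then e'!j + int (m j) else e'!j) [0..<length e']) k"
    using Cons by (simp add: len)
  also have "(\<Prod>i\<in>set is. \<Prod>r\<in>{1..m i}. (of_int (e'!i + int r))::'a) =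
     (\<Prod>i\<in>set is. \<Prod>r\<in>{1..m i}. of_int (e!i + int r))"
    by (rule prod.cong) (simp_all add: same)
  also have "map (\<lambda>j. if j \<in> set is then e'!j + int (m j) else e'!j) [0..<length e'] =
     map (\<lambda>j. if j \<in> set (i#is) then e!j + int (m j) else e!j) [0..<length e]"
    using Cons.prems by (auto simp: len e'_def nth_list_update)
  finally show ?case using Cons.prems by (simp add: algebra_simps)
qed

lemma Ds_mono_eval:
  assumes "length e = length \<beta>"
  shows "Ds_mono \<beta> F e k =
    (\<Prod>i\<in>{..<length \<beta>}. \<Prod>r\<in>{1..\<beta>!i}. of_int (e!i + int r)) *
    F (map (\<lambda>j. e!j + int (\<beta>!j)) [0..<length e]) k"
proof -
  have "Ds_mono \<beta> F e k =
    (\<Prod>i\<in>set [0..<length \<beta>]. \<Prod>r\<in>{1..\<beta>!i}. of_int (e!i + int r)) *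
    F (map (\<lambda>j. if j \<in> set [0..<length \<beta>] then e!j + int (\<beta>!j) else e!j) [0..<length e]) k"
    unfolding Ds_mono_def using assms by (intro foldr_Ds) auto
  also have "map (\<lambda>j. if j \<in> set [0..<length \<beta>] then e!j + int (\<beta>!j) else e!j) [0..<length e]
     = map (\<lambda>j. e!j + int (\<beta>!j)) [0..<length e]" using assms by auto
  finally show ?thesis by (simp add: atLeast0LessThan)
qed

lemma deriv_pow_const: "(fps_deriv^^j) (fps_const c * d) = fps_const c * (fps_deriv^^j) d"
  by (induction j) simp_all

lemma sigma_diag: "n \<ge> 1 \<Longrightarrow> sigma n a (replicate (n-1) (-1)) k = a (replicate n k)"
proof -
  assume n: "n \<ge> 1"
  have "sigma_idx n (replicate (n-1) (-1)) k = replicate n (int k)"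
  proof (rule nth_equalityI)
    show "length (sigma_idx n (replicate (n-1) (-1)) k) = length (replicate n (int k))"
      by (simp add: sigma_idx_def)
    fix i assume "i < length (sigma_idx n (replicate (n-1) (-1)) k)"
    then have i: "i < n" by (simp add: sigma_idx_def)
    have "(\<Sum>l\<in>{i..<n-1}. replicate (n-1) (-1::int) ! l + 1) = 0"
      by (rule sum.neutral) auto
    then show "sigma_idx n (replicate (n-1) (-1)) k ! i = replicate n (int k) ! i"
      using i by (simp add: sigma_idx_def)
  qed
  moreover have "map nat (replicate n (int k)) = replicate n k" by simp
  ultimately show ?thesis using n by (simp add: sigma_def)
qed

lemma deriv_pow_zero: "(fps_deriv^^j) 0 = 0"
  by (induction j) simp_all

theorem lemma4p14:
  fixes n :: nat and a :: "nat list \<Rightarrow> 'a::field_char_0"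
    and P :: "nat list \<Rightarrow> nat \<Rightarrow> 'a poly" and \<pi> :: "nat \<Rightarrow> nat" and \<alpha> :: "nat list"
  assumes "n \<ge> 2"
    and "bij_betw \<pi> {..<n-1} {..<n-1}"
    and "finite (op_supp P)"
    and "\<forall>\<beta>\<in>mono_supp P. length \<beta> = n - 1"
    and "\<alpha> \<in> mono_supp P"
    and "\<forall>\<beta>\<in>mono_supp P. \<beta> \<noteq> \<alpha> \<longrightarrow> lex_less (n - 1) \<pi> \<alpha> \<beta>"
    and "apply_op P (sigma n a) = (\<lambda>e k. 0)"
  shows "weyl_apply (P \<alpha>) (diag n a) = 0"
proof -
  define e0 where "e0 = map (\<lambda>i. -1 - int (\<alpha>!i)) [0..<n-1]"
  have lenA: "length \<alpha> = n - 1" using assms(4,5) by blast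
  have le0: "length e0 = n - 1" by (simp add: e0_def)
  define c :: 'a where "c = (\<Prod>i\<in>{..<n-1}. \<Prod>r\<in>{1..\<alpha>!i}. of_int (e0!i + int r))"
  have K1: "Ds_mono \<beta> F e0 k = 0" if "\<beta> \<in> mono_supp P" "\<beta> \<noteq> \<alpha>" for \<beta> and F :: "'a sseries" and k
  proof -
    have lb: "length \<beta> = n - 1" using assms(4) that by blast
    from assms(6) that obtain i where i: "i < n - 1" "\<alpha> ! (\<pi> i) < \<beta> ! (\<pi> i)"
      unfolding lex_less_def by blast
    define j where "j = \<pi> i"
    have j: "j < n - 1" using bij_betw_apply[OF assms(2)] i(1) by (auto simp: j_def)
    have "(\<Prod>r\<in>{1..\<beta>!j}. (of_int (e0!j + int r))::'a) = 0"
      using i(2) j by (auto simp: prod_zero_iff e0_def j_def intro!: bexI[where x="Suc (\<alpha>!j)"])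
    then have "(\<Prod>i\<in>{..<length \<beta>}. \<Prod>r\<in>{1..\<beta>!i}. (of_int (e0!i + int r))::'a) = 0"
      using j lb by (auto simp: prod_zero_iff)
    moreover have "length e0 = length \<beta>" using le0 lb by simp
    ultimately show ?thesis using Ds_mono_eval[of e0 \<beta> F k] by simp
  qed
  have K2: "Ds_mono \<alpha> F e0 k = c * F (replicate (n-1) (-1)) k" for F :: "'a sseries" and k
  proof -
    have "map (\<lambda>j. e0!j + int (\<alpha>!j)) [0..<length e0] = replicate (n-1) (-1)"
      by (rule nth_equalityI) (auto simp: e0_def le0)
    then show ?thesis by (simp add: Ds_mono_eval le0 lenA c_def)
  qed
  have cnz: "c \<noteq> 0"
  proof -
    have "(of_int (e0!i + int r)::'a) \<noteq> 0" if "i < n - 1" "r \<in> {1..\<alpha>!i}" for i r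
    proof -
      have "e0!i + int r \<noteq> 0" using that by (simp add: e0_def)
      then show ?thesis by (simp only: of_int_eq_0_iff not_False_eq_True)
    qed
    then show ?thesis unfolding c_def by (simp add: prod_zero_iff)
  qed
  have slz: "sl e0 (Ds_mono \<beta> (sigma n a)) = 0" if "\<beta> \<in> mono_supp P" "\<beta> \<noteq> \<alpha>" for \<beta>
    using K1[OF that] by (simp add: sl_def fps_eq_iff)
  have sla: "sl e0 (Ds_mono \<alpha> (sigma n a)) = fps_const c * diag n a"
    using K2 sigma_diag[of n a] assms(1) by (simp add: sl_def fps_eq_iff diag_def)
  define g where "g x = fps_of_poly (P (fst x) (snd x)) * (fps_deriv ^^ snd x) (sl e0 (Ds_mono (fst x) (sigma n a)))" for x
  have "0 = sl e0 (apply_op P (sigma n a))" using assms(7) by (simp add: sl_def fps_eq_iff)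
  also have "\<dots> = (\<Sum>x\<in>op_supp P. sl e0 (Mpoly (P (fst x) (snd x)) ((Dt ^^ snd x) (Ds_mono (fst x) (sigma n a)))))"
    by (simp add: sl_def apply_op_def fps_eq_iff fps_sum_nth case_prod_beta)
  also have "\<dots> = (\<Sum>x\<in>op_supp P. g x)"
    by (simp add: g_def sl_Mpoly sl_Dt_pow)
  also have "\<dots> = (\<Sum>x\<in>Pair \<alpha> ` {j. P \<alpha> j \<noteq> 0}. g x)"
  proof (rule sum.mono_neutral_right[OF assms(3)])
    show "Pair \<alpha> ` {j. P \<alpha> j \<noteq> 0} \<subseteq> op_supp P" by (auto simp: op_supp_def)
    show "\<forall>x\<in>op_supp P - Pair \<alpha> ` {j. P \<alpha> j \<noteq> 0}. g x = 0"
    proof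
      fix x assume x: "x \<in> op_supp P - Pair \<alpha> ` {j. P \<alpha> j \<noteq> 0}"
      obtain \<beta> j where xb: "x = (\<beta>, j)" by force
      have "\<beta> \<in> mono_supp P" "\<beta> \<noteq> \<alpha>" using x xb by (auto simp: op_supp_def mono_supp_def)
      then show "g x = 0" using slz by (simp add: g_def xb deriv_pow_zero)
    qed
  qed
  also have "\<dots> = (\<Sum>j\<in>{j. P \<alpha> j \<noteq> 0}. g (\<alpha>, j))"
    by (subst sum.reindex) (auto simp: inj_on_def)
  also have "\<dots> = fps_const c * weyl_apply (P \<alpha>) (diag n a)"
    by (simp add: g_def weyl_apply_def sla deriv_pow_const sum_distrib_left mult.left_commute)
  finally show ?thesis using cnz by simp
qed

end
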